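(* Let $\Lambda$ be a row-finite source-free $k$-graph. In any $\Lambda$-semibranching function system on a measure space $(X,\mu)$, if $(\lambda, \nu)$ is a periodic pair, then $\mu (R_\lambda \,\Delta\, R_\nu) = 0$.
   Context: A $k$-graph is a countable small category $\Lambda$ with a functor $d:\Lambda\to\mathbb{N}^k$ with unique factorization; vertices $\Lambda^0$, range/source $r,s$; row-finite/source-free: paths of a given degree and range form a finite/nonempty set. $\Lambda^\infty$ is the set of infinite paths, $Z(v)$ those with range $v$, and $\lambda x$ denotes prefixing of $\lambda$ to $x\in Z(s(\lambda))$. A pair $(\lambda,\nu)\in\Lambda\times\Lambda$ is periodic if $s(\lambda)=s(\nu)$ and $\lambda x=\nu x$ for all $x\in Z(s(\lambda))$. A $\Lambda$-semibranching function system on $(X,\mu)$: measurable $D_\lambda$, prefixing maps $\tau_\lambda:D_\lambda\to X$, $R_\lambda=\tau_\lambda(D_\lambda)$, coding maps $\tau^m$, such that for each $m\in\mathbb{N}^k$ $\{\tau_\lambda:d(\lambda)=m\}$ is a semibranching function system with coding map $\tau^m$ ($0<\mu(D_\lambda)<\infty$, $\mu(R_\lambda)<\infty$, $\mu(R_\lambda\cap R_\eta)=0$ for distinct $\lambda,\eta$ of degree $m$, $\mu(X\setminus\bigcup_{d(\lambda)=m}R_\lambda)=0$, $d(\mu\circ\tau_\lambda)/d\mu>0$ a.e. on $D_\lambda$, $\tau^m\circ\tau_\lambda=\mathrm{id}$); $\tau_v=\mathrm{id}$ for $v\in\Lambda^0$; for $\nu\in s(\lambda)\Lambda$, $R_\nu\subseteq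 D_\lambda$ a.e. and $\tau_\lambda\tau_\nu=\tau_{\lambda\nu}$ a.e.; $\tau^m\tau^n=\tau^{m+n}$. *)

theory Defs
  imports "HOL-Analysis.Analysis"
begin

text \<open>Degrees: elements of N^k are functions 'k => nat for a finite index type 'k
 (k = CARD('k)).  Pointwise sum, difference and zero.\<close>

definition dadd :: "('k \<Rightarrow> nat) \<Rightarrow> ('k \<Rightarrow> nat) \<Rightarrow> ('k \<Rightarrow> nat)" where
  "dadd m n = (\<lambda>i. m i + n i)"

definition dsub :: "('k \<Rightarrow> nat) \<Rightarrow> ('k \<Rightarrow> nat) \<Rightarrow> ('k \<Rightarrow> nat)" where
  "dsub n m = (\<lambda>i. n i - m i)"

definition dzero :: "'k \<Rightarrow> nat" where
  "dzero = (\<lambda>_. 0)"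

text \<open>A small category given by its set of morphisms, the subset of identity morphisms
 (vertices), range, source, composition (comp lam mu = lam mu, defined when s lam = r mu)
 and the degree functor.\<close>

record ('a, 'k) kg =
  arr  :: "'a set"
  vert :: "'a set"
  rng  :: "'a \<Rightarrow> 'a"
  src  :: "'a \<Rightarrow> 'a"
  comp :: "'a \<Rightarrow> 'a \<Rightarrow> 'a"
  deg  :: "'a \<Rightarrow> 'k \<Rightarrow> nat"

definition kgraph :: "('a, 'k::finite) kg \<Rightarrow> bool" where
  "kgraph G \<longleftrightarrow>
    countable (arr G) \<and> vert G \<subseteq> arr G \<and>
    (\<forall>l\<in>arr G. rng G l \<in> vert G \<and> src G l \<in> vert G) \<and>
    (\<forall>v\<in>vert G. rng G v = v \<and> src G v = v) \<and>
    (\<forall>l\<in>arr G. \<forall>m\<in>arr G. src G l = rng G m \<longrightarrow>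
        comp G l m \<in> arr G \<and> rng G (comp G l m) = rng G l \<and> src G (comp G l m) = src G m) \<and>
    (\<forall>l\<in>arr G. comp G (rng G l) l = l \<and> comp G l (src G l) = l) \<and>
    (\<forall>l\<in>arr G. \<forall>m\<in>arr G. \<forall>n\<in>arr G. src G l = rng G m \<and> src G m = rng G n \<longrightarrow>
        comp G (comp G l m) n = comp G l (comp G m n)) \<and>
    (\<forall>l\<in>arr G. \<forall>m\<in>arr G. src G l = rng G m \<longrightarrow>
        deg G (comp G l m) = dadd (deg G l) (deg G m)) \<and>
    (\<forall>l\<in>arr G. \<forall>m n. deg G l = dadd m n \<longrightarrow>
        (\<exists>!p. fst p \<in> arr G \<and> snd p \<in> arr G \<and> src G (fst p) = rng G (snd p) \<and>
              deg G (fst p) = m \<and> deg G (snd p) = n \<and> comp G (fst p) (snd p) = l))"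

definition row_finite :: "('a, 'k) kg \<Rightarrow> bool" where
  "row_finite G \<longleftrightarrow> (\<forall>v\<in>vert G. \<forall>m. finite {l\<in>arr G. rng G l = v \<and> deg G l = m})"

definition source_free :: "('a, 'k) kg \<Rightarrow> bool" where
  "source_free G \<longleftrightarrow> (\<forall>v\<in>vert G. \<forall>m. {l\<in>arr G. rng G l = v \<and> deg G l = m} \<noteq> {})"

text \<open>Infinite paths: degree-preserving functors from Omega_k = {(m,n). m \<le> n} to Lambda
 (normalised to undefined off the domain).\<close>

definition inf_paths :: "('a, 'k) kg \<Rightarrow> (('k \<Rightarrow> nat) \<Rightarrow> ('k \<Rightarrow> nat) \<Rightarrow> 'a) set" where
  "inf_paths G = {x.
     (\<forall>m n. m \<le> n \<longrightarrow> x m n \<in> arr G \<and> deg G (x m n) = dsub n m) \<and>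
     (\<forall>m. x m m \<in> vert G) \<and>
     (\<forall>m n p. m \<le> n \<and> n \<le> p \<longrightarrow>
        src G (x m n) = rng G (x n p) \<and> comp G (x m n) (x n p) = x m p) \<and>
     (\<forall>m n. \<not> m \<le> n \<longrightarrow> x m n = undefined)}"

definition Zv :: "('a, 'k) kg \<Rightarrow> 'a \<Rightarrow> (('k \<Rightarrow> nat) \<Rightarrow> ('k \<Rightarrow> nat) \<Rightarrow> 'a) set" where
  "Zv G v = {x \<in> inf_paths G. x dzero dzero = v}"

definition prefix :: "('a, 'k) kg \<Rightarrow> 'a \<Rightarrow> (('k \<Rightarrow> nat) \<Rightarrow> ('k \<Rightarrow> nat) \<Rightarrow> 'a)
    \<Rightarrow> (('k \<Rightarrow> nat) \<Rightarrow> ('k \<Rightarrow> nat) \<Rightarrow> 'a)" where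
  "prefix G l x = (THE y. y \<in> inf_paths G \<and> y dzero (deg G l) = l \<and>
      (\<forall>m n. m \<le> n \<longrightarrow> y (dadd (deg G l) m) (dadd (deg G l) n) = x m n))"

definition periodic_pair :: "('a, 'k) kg \<Rightarrow> 'a \<Rightarrow> 'a \<Rightarrow> bool" where
  "periodic_pair G l n \<longleftrightarrow> l \<in> arr G \<and> n \<in> arr G \<and> src G l = src G n \<and>
     (\<forall>x\<in>Zv G (src G l). prefix G l x = prefix G n x)"

definition Rset :: "('a \<Rightarrow> 'x set) \<Rightarrow> ('a \<Rightarrow> 'x \<Rightarrow> 'x) \<Rightarrow> 'a \<Rightarrow> 'x set" where
  "Rset D tau l = tau l ` D l"

definition symdiff :: "'x set \<Rightarrow> 'x set \<Rightarrow> 'x set" where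
  "symdiff A B = (A - B) \<union> (B - A)"

text \<open>The Radon--Nikodym condition d(mu o tau_l)/d mu > 0 a.e. on D_l
 is written out: mu o tau_l has a density f w.r.t. mu on D_l with f > 0 a.e. on D_l.\<close>

definition sbfs_deg :: "'x measure \<Rightarrow> ('a, 'k) kg \<Rightarrow> ('a \<Rightarrow> 'x set) \<Rightarrow> ('a \<Rightarrow> 'x \<Rightarrow> 'x)
    \<Rightarrow> (('k \<Rightarrow> nat) \<Rightarrow> 'x \<Rightarrow> 'x) \<Rightarrow> ('k \<Rightarrow> nat) \<Rightarrow> bool" where
  "sbfs_deg M G D tau taum m \<longleftrightarrow>
    (\<forall>l\<in>arr G. deg G l = m \<longrightarrow>
       D l \<in> sets M \<and> 0 < emeasure M (D l) \<and> emeasure M (D l) < \<infinity> \<and>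
       tau l \<in> measurable (restrict_space M (D l)) M \<and>
       (\<forall>A\<in>sets M. A \<subseteq> D l \<longrightarrow> tau l ` A \<in> sets M) \<and>
       emeasure M (Rset D tau l) < \<infinity> \<and>
       (\<exists>f\<in>borel_measurable M. (AE x in M. x \<in> D l \<longrightarrow> f x > 0) \<and>
          (\<forall>A\<in>sets M. A \<subseteq> D l \<longrightarrow> emeasure M (tau l ` A) = set_nn_integral M A f)) \<and>
       (\<forall>x\<in>D l. taum m (tau l x) = x)) \<and>
    (\<forall>l\<in>arr G. \<forall>n\<in>arr G. deg G l = m \<and> deg G n = m \<and> l \<noteq> n \<longrightarrow>
       emeasure M (Rset D tau l \<inter> Rset D tau n) = 0) \<and>
    emeasure M (space M - (\<Union>l\<in>{l\<in>arr G. deg G l = m}. Rset D tau l)) = 0"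

definition lambda_sbfs :: "'x measure \<Rightarrow> ('a, 'k) kg \<Rightarrow> ('a \<Rightarrow> 'x set) \<Rightarrow> ('a \<Rightarrow> 'x \<Rightarrow> 'x)
    \<Rightarrow> (('k \<Rightarrow> nat) \<Rightarrow> 'x \<Rightarrow> 'x) \<Rightarrow> bool" where
  "lambda_sbfs M G D tau taum \<longleftrightarrow>
    (\<forall>m. sbfs_deg M G D tau taum m) \<and>
    (\<forall>v\<in>vert G. \<forall>x\<in>D v. tau v x = x) \<and>
    (\<forall>l\<in>arr G. \<forall>n\<in>arr G. rng G n = src G l \<longrightarrow>
       emeasure M (Rset D tau n - D l) = 0 \<and>
       emeasure M (symdiff (D n) (D (comp G l n))) = 0 \<and>
       (AE x in M. x \<in> D n \<longrightarrow> tau l (tau n x) = tau (comp G l n) x)) \<and>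
    (\<forall>m n. \<forall>x\<in>space M. taum m (taum n x) = taum (dadd m n) x)"

end

theory Submission
  imports Defs
begin


lemma dadd_zero[simp]: "dadd m dzero = m" "dadd dzero m = m"
  by (auto simp: dadd_def dzero_def)
lemma dsub_zero[simp]: "dsub q dzero = q" by (auto simp: dsub_def dzero_def)
lemma dzero_le[simp]: "dzero \<le> q" by (auto simp: dzero_def le_fun_def)
lemma dsub_self[simp]: "dsub q q = dzero" by (auto simp: dsub_def dzero_def)
lemma dadd_dsub[simp]: "dsub (dadd a b) a = b" by (auto simp: dadd_def dsub_def)
lemma dadd_dsub2[simp]: "dsub (dadd a b) b = a" by (auto simp: dadd_def dsub_def)
lemma dadd_le1[simp]: "a \<le> dadd a b" "b \<le> dadd a b" by (auto simp: dadd_def le_fun_def)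
lemma dadd_mono: "m \<le> n \<Longrightarrow> dadd a m \<le> dadd a n" by (auto simp: dadd_def le_fun_def)
lemma dadd_le_dsub: "p \<le> q \<Longrightarrow> dadd p (dsub q p) = q"
  by (auto simp: dadd_def dsub_def le_fun_def fun_eq_iff)
lemma dadd_self_zero: "dadd a a = a \<Longrightarrow> a = dzero"
  by (auto simp: dadd_def dzero_def fun_eq_iff)

primrec chain :: "('a, 'k) kg \<Rightarrow> 'a \<Rightarrow> nat \<Rightarrow> 'a" where
  "chain G e 0 = e"
| "chain G e (Suc j) = comp G (chain G e j)
     (SOME z. z \<in> arr G \<and> rng G z = src G (chain G e j) \<and> deg G z = (\<lambda>_. 1))"

context fixes G :: "('a, 'k::finite) kg" assumes kg: "kgraph G"
begin

lemma kg_vert': "vert G \<subseteq> arr G" using kg unfolding kgraph_def by blast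
lemma kg_vert: "v \<in> vert G \<Longrightarrow> v \<in> arr G" using kg unfolding kgraph_def by blast
lemma kg_rng: "l \<in> arr G \<Longrightarrow> rng G l \<in> vert G" using kg unfolding kgraph_def by blast
lemma kg_src: "l \<in> arr G \<Longrightarrow> src G l \<in> vert G" using kg unfolding kgraph_def by blast
lemma kg_vrs: "v \<in> vert G \<Longrightarrow> rng G v = v" "v \<in> vert G \<Longrightarrow> src G v = v"
  using kg unfolding kgraph_def by blast+
lemma kg_comp: "l \<in> arr G \<Longrightarrow> m \<in> arr G \<Longrightarrow> src G l = rng G m \<Longrightarrow>
   comp G l m \<in> arr G \<and> rng G (comp G l m) = rng G l \<and> src G (comp G l m) = src G m"
  using kg unfolding kgraph_def by blast
lemma kg_id: "l \<in> arr G \<Longrightarrow> comp G (rng G l) l = l" "l \<in> arr G \<Longrightarrow> comp G l (src G l) = l"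
  using kg unfolding kgraph_def by blast+
lemma kg_assoc: "l \<in> arr G \<Longrightarrow> m \<in> arr G \<Longrightarrow> n \<in> arr G \<Longrightarrow> src G l = rng G m \<Longrightarrow> src G m = rng G n \<Longrightarrow>
        comp G (comp G l m) n = comp G l (comp G m n)"
  using kg unfolding kgraph_def by blast
lemma kg_deg: "l \<in> arr G \<Longrightarrow> m \<in> arr G \<Longrightarrow> src G l = rng G m \<Longrightarrow>
        deg G (comp G l m) = dadd (deg G l) (deg G m)"
  using kg unfolding kgraph_def by blast
lemma kg_fact: "l \<in> arr G \<Longrightarrow> deg G l = dadd m n \<Longrightarrow>
        (\<exists>!p. fst p \<in> arr G \<and> snd p \<in> arr G \<and> src G (fst p) = rng G (snd p) \<and>
              deg G (fst p) = m \<and> deg G (snd p) = n \<and> comp G (fst p) (snd p) = l)"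
  using kg unfolding kgraph_def by blast

lemma vert_deg: "v \<in> vert G \<Longrightarrow> deg G v = dzero"
proof -
  assume v: "v \<in> vert G"
  then have a: "v \<in> arr G" by (rule kg_vert)
  have "comp G v v = v" using kg_id(1)[OF a] kg_vrs[OF v] by simp
  then have "deg G v = dadd (deg G v) (deg G v)" using kg_deg[OF a a] kg_vrs[OF v] by simp
  then show ?thesis using dadd_self_zero by metis
qed

lemma deg0_vert: assumes l: "l \<in> arr G" and d: "deg G l = dzero" shows "l \<in> vert G"
proof -
  have r: "rng G l \<in> vert G" "src G l \<in> vert G" using kg_rng[OF l] kg_src[OF l] .
  have "deg G l = dadd dzero dzero" using d by simp
  from kg_fact[OF l this] have u: "\<exists>!p. fst p \<in> arr G \<and> snd p \<in> arr G \<and> src G (fst p) = rng G (snd p) \<and>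
              deg G (fst p) = dzero \<and> deg G (snd p) = dzero \<and> comp G (fst p) (snd p) = l" .
  let ?P = "\<lambda>p. fst p \<in> arr G \<and> snd p \<in> arr G \<and> src G (fst p) = rng G (snd p) \<and>
              deg G (fst p) = dzero \<and> deg G (snd p) = dzero \<and> comp G (fst p) (snd p) = l"
  have p1: "?P (rng G l, l)" using r l kg_vert kg_vrs vert_deg d kg_id by auto
  have p2: "?P (l, src G l)" using r l kg_vert kg_vrs vert_deg d kg_id by auto
  have "(rng G l, l) = (l, src G l)" using u p1 p2 by (metis (no_types, lifting))
  then show ?thesis using r by simp
qed


definition fac where "fac w p = (THE pr. fst pr \<in> arr G \<and> snd pr \<in> arr G \<and> src G (fst pr) = rng G (snd pr) \<and>
   deg G (fst pr) = p \<and> deg G (snd pr) = dsub (deg G w) p \<and> comp G (fst pr) (snd pr) = w)"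
definition "f1 w p = fst (fac w p)"
definition "f2 w p = snd (fac w p)"

lemma fac_eq: assumes u: "u \<in> arr G" and v: "v \<in> arr G" and c: "src G u = rng G v"
  shows "f1 (comp G u v) (deg G u) = u" "f2 (comp G u v) (deg G u) = v"
proof -
  let ?w = "comp G u v"
  have w: "?w \<in> arr G" using kg_comp[OF u v c] by blast
  have dw: "deg G ?w = dadd (deg G u) (deg G v)" using kg_deg[OF u v c] .
  from kg_fact[OF w dw] have ex: "\<exists>!p. fst p \<in> arr G \<and> snd p \<in> arr G \<and> src G (fst p) = rng G (snd p) \<and>
              deg G (fst p) = deg G u \<and> deg G (snd p) = deg G v \<and> comp G (fst p) (snd p) = ?w" .
  have "fac ?w (deg G u) = (u, v)"
    unfolding fac_def dw dadd_dsub
    apply (rule the_equality)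
    using u v c apply simp
    using ex u v c by (metis fst_conv snd_conv)
  then show "f1 (comp G u v) (deg G u) = u" "f2 (comp G u v) (deg G u) = v"
    unfolding f1_def f2_def by auto
qed

lemma fac_ex: assumes w: "w \<in> arr G" and p: "p \<le> deg G w"
  shows "f1 w p \<in> arr G" "f2 w p \<in> arr G" "src G (f1 w p) = rng G (f2 w p)"
    "deg G (f1 w p) = p" "deg G (f2 w p) = dsub (deg G w) p" "comp G (f1 w p) (f2 w p) = w"
proof -
  have "deg G w = dadd p (dsub (deg G w) p)" using dadd_le_dsub[OF p] by simp
  from kg_fact[OF w this] have ex: "\<exists>!pr. fst pr \<in> arr G \<and> snd pr \<in> arr G \<and> src G (fst pr) = rng G (snd pr) \<and>
   deg G (fst pr) = p \<and> deg G (snd pr) = dsub (deg G w) p \<and> comp G (fst pr) (snd pr) = w" .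
  from theI'[OF ex] show "f1 w p \<in> arr G" "f2 w p \<in> arr G" "src G (f1 w p) = rng G (f2 w p)"
    "deg G (f1 w p) = p" "deg G (f2 w p) = dsub (deg G w) p" "comp G (f1 w p) (f2 w p) = w"
    unfolding f1_def f2_def fac_def by auto
qed

lemma f2_src: "w \<in> arr G \<Longrightarrow> p \<le> deg G w \<Longrightarrow> src G (f2 w p) = src G w"
  using fac_ex kg_comp by metis
lemma f1_rng: "w \<in> arr G \<Longrightarrow> p \<le> deg G w \<Longrightarrow> rng G (f1 w p) = rng G w"
  using fac_ex kg_comp by metis

lemma f2_zero: assumes w: "w \<in> arr G" shows "f2 w dzero = w"
proof -
  have "f2 (comp G (rng G w) w) (deg G (rng G w)) = w"
    using fac_eq[of "rng G w" w] w kg_rng kg_vert kg_vrs by simp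
  then show ?thesis using kg_id(1)[OF w] vert_deg[OF kg_rng[OF w]] by simp
qed

lemma f1_full: assumes w: "w \<in> arr G" shows "f1 w (deg G w) = w"
proof -
  have "f1 (comp G w (src G w)) (deg G w) = w"
    using fac_eq[of w "src G w"] w kg_src kg_vert kg_vrs by simp
  then show ?thesis using kg_id(2)[OF w] by simp
qed

lemma f1_f1: assumes w: "w \<in> arr G" and q: "q \<le> q'" and q': "q' \<le> deg G w"
  shows "f1 (f1 w q') q = f1 w q"
proof -
  let ?A = "f1 w q'" and ?s = "f2 w q'"
  have A: "?A \<in> arr G" "?s \<in> arr G" "src G ?A = rng G ?s" "deg G ?A = q'" "comp G ?A ?s = w"
    using fac_ex[OF w q'] by auto
  have qA: "q \<le> deg G ?A" using A q by simp
  note B = fac_ex[OF A(1) qA]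
  have c2: "src G (f2 ?A q) = rng G ?s" using f2_src[OF A(1) qA] A by simp
  have C: "comp G (f2 ?A q) ?s \<in> arr G" "rng G (comp G (f2 ?A q) ?s) = rng G (f2 ?A q)"
    using kg_comp[OF B(2) A(2) c2] by auto
  have "w = comp G (comp G (f1 ?A q) (f2 ?A q)) ?s" using A B by simp
  also have "\<dots> = comp G (f1 ?A q) (comp G (f2 ?A q) ?s)"
    using kg_assoc[OF B(1) B(2) A(2) B(3) c2] .
  finally have "f1 w (deg G (f1 ?A q)) = f1 ?A q"
    using fac_eq[OF B(1) C(1)] B(3) C(2) by simp
  then show ?thesis using B(4) by simp
qed

lemma f1_comp: assumes u: "u \<in> arr G" and v: "v \<in> arr G" and c: "src G u = rng G v"
  and q: "q \<le> deg G u" shows "f1 (comp G u v) q = f1 u q"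
proof -
  have w: "comp G u v \<in> arr G" using kg_comp[OF u v c] by blast
  have "f1 (comp G u v) q = f1 (f1 (comp G u v) (deg G u)) q"
    using f1_f1[OF w q] kg_deg[OF u v c] by simp
  then show ?thesis using fac_eq[OF u v c] by simp
qed

lemma inf_arr: "x \<in> inf_paths G \<Longrightarrow> m \<le> n \<Longrightarrow> x m n \<in> arr G \<and> deg G (x m n) = dsub n m"
  unfolding inf_paths_def by blast
lemma inf_vert: "x \<in> inf_paths G \<Longrightarrow> x m m \<in> vert G"
  unfolding inf_paths_def by blast
lemma inf_comp: "x \<in> inf_paths G \<Longrightarrow> m \<le> n \<Longrightarrow> n \<le> p \<Longrightarrow>
   src G (x m n) = rng G (x n p) \<and> comp G (x m n) (x n p) = x m p"
  unfolding inf_paths_def by blast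
lemma inf_undef: "x \<in> inf_paths G \<Longrightarrow> \<not> m \<le> n \<Longrightarrow> x m n = undefined"
  unfolding inf_paths_def by blast

lemma inf_rng: assumes x: "x \<in> inf_paths G" shows "rng G (x dzero q) = x dzero dzero"
  using inf_comp[OF x, of dzero dzero q] kg_vrs(2)[OF inf_vert[OF x]] by simp

lemma inf_eq: assumes x: "x \<in> inf_paths G" and y: "y \<in> inf_paths G"
  and h: "\<And>q. \<exists>Q. q \<le> Q \<and> x dzero Q = y dzero Q"
  shows "x = y"
proof (intro ext)
  fix p q
  show "x p q = y p q"
  proof (cases "p \<le> q")
    case False then show ?thesis using inf_undef x y by metis
  next
    case True
    obtain Q where Q: "q \<le> Q" "x dzero Q = y dzero Q" using h by blast
    have x0: "\<And>z. z \<in> inf_paths G \<Longrightarrow> z dzero q = f1 (z dzero Q) q"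
    proof -
      fix z assume z: "z \<in> inf_paths G"
      have "f1 (comp G (z dzero q) (z q Q)) (deg G (z dzero q)) = z dzero q"
        using fac_eq(1)[OF conjunct1[OF inf_arr[OF z, of dzero q]] conjunct1[OF inf_arr[OF z, of q Q]]]
          inf_comp[OF z, of dzero q Q] Q(1) by simp
      then show "z dzero q = f1 (z dzero Q) q" using inf_comp[OF z, of dzero q Q] Q(1) inf_arr[OF z, of dzero q] by simp
    qed
    have x1: "\<And>z. z \<in> inf_paths G \<Longrightarrow> z p q = f2 (z dzero q) p"
    proof -
      fix z assume z: "z \<in> inf_paths G"
      have "f2 (comp G (z dzero p) (z p q)) (deg G (z dzero p)) = z p q"
        using fac_eq(2)[OF conjunct1[OF inf_arr[OF z, of dzero p]] conjunct1[OF inf_arr[OF z, of p q]]]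
          inf_comp[OF z, of dzero p q] True by simp
      then show "z p q = f2 (z dzero q) p" using inf_comp[OF z, of dzero p q] True inf_arr[OF z, of dzero p] by simp
    qed
    show ?thesis using x0[OF x] x0[OF y] x1[OF x] x1[OF y] Q(2) by simp
  qed
qed

lemma mk_path:
  assumes F: "\<And>q. F q \<in> arr G \<and> deg G (F q) = q"
    and coh: "\<And>q q'. q \<le> q' \<Longrightarrow> f1 (F q') q = F q"
  shows "(\<lambda>p q. if p \<le> q then f2 (F q) p else undefined) \<in> inf_paths G" (is "?x \<in> _")
    and "(\<lambda>p q. if p \<le> q then f2 (F q) p else undefined) dzero q = F q"
proof -
  show "?x dzero q = F q" using f2_zero F by simp
  have a: "\<And>m n. m \<le> n \<Longrightarrow> ?x m n \<in> arr G \<and> deg G (?x m n) = dsub n m"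
    using fac_ex F by simp
  have b: "\<And>m. ?x m m \<in> vert G"
  proof -
    fix m
    have "f2 (F m) m \<in> arr G" "deg G (f2 (F m) m) = dzero" using fac_ex[of "F m" m] F by auto
    then show "?x m m \<in> vert G" using deg0_vert by simp
  qed
  have c: "\<And>m n p. m \<le> n \<and> n \<le> p \<Longrightarrow> src G (?x m n) = rng G (?x n p) \<and> comp G (?x m n) (?x n p) = ?x m p"
  proof -
    fix m n p :: "'k \<Rightarrow> nat" assume mnp: "m \<le> n \<and> n \<le> p"
    then have mn: "m \<le> n" and np: "n \<le> p" by auto
    have mp: "m \<le> p" using mn np by (rule order_trans)
    let ?P = "F p"
    have P: "?P \<in> arr G" "deg G ?P = p" using F by auto
    have Fn: "F n = f1 ?P n" using coh[OF np] by simp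
    have Fm: "F m = f1 (F n) m" using coh[OF mn] by simp
    let ?a = "f2 (F n) m" and ?b = "f2 ?P n"
    have Fn': "F n \<in> arr G" "deg G (F n) = n" using F by auto
    note A = fac_ex[OF Fn'(1), of m] note B = fac_ex[OF P(1), of n]
    have src_a: "src G ?a = rng G ?b" using f2_src[OF Fn'(1)] Fn' mn B(3) Fn P np by simp
    have ab: "comp G ?a ?b \<in> arr G" "rng G (comp G ?a ?b) = rng G ?a"
      using kg_comp[OF A(2) B(2) src_a] Fn' mn B P np by auto
    have "?P = comp G (F n) ?b" using B P np Fn by simp
    also have "\<dots> = comp G (comp G (F m) ?a) ?b" using A Fm Fn' mn by simp
    also have "\<dots> = comp G (F m) (comp G ?a ?b)"
      using kg_assoc[OF A(1) A(2) B(2) A(3) src_a] Fm Fn' mn P np by simp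
    finally have "f2 ?P (deg G (F m)) = comp G ?a ?b"
      using fac_eq[OF _ ab(1)] A Fm Fn' mn ab(2) by (metis)
    then show "src G (?x m n) = rng G (?x n p) \<and> comp G (?x m n) (?x n p) = ?x m p"
      using mn np mp src_a F by simp
  qed
  show "?x \<in> inf_paths G" unfolding inf_paths_def using a b c by auto
qed


lemma chain_props: assumes sf: "source_free G" and e: "e \<in> arr G"
  shows "chain G e j \<in> arr G \<and> deg G (chain G e j) = dadd (deg G e) (\<lambda>_. j)"
proof (induction j)
  case 0 then show ?case using e by (simp add: dadd_def)
next
  case (Suc j)
  let ?c = "chain G e j"
  have "{l\<in>arr G. rng G l = src G ?c \<and> deg G l = (\<lambda>_. 1)} \<noteq> {}"
    using sf kg_src Suc unfolding source_free_def by blast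
  then have "\<exists>z. z \<in> arr G \<and> rng G z = src G ?c \<and> deg G z = (\<lambda>_. 1)" by blast
  from someI_ex[OF this] obtain z where z: "z \<in> arr G" "rng G z = src G ?c" "deg G z = (\<lambda>_. 1)"
    and zd: "z = (SOME z. z \<in> arr G \<and> rng G z = src G ?c \<and> deg G z = (\<lambda>_. 1))" by blast
  have "chain G e (Suc j) = comp G ?c z" using zd by simp
  then show ?case using kg_comp[of ?c z] kg_deg[of ?c z] Suc z by (auto simp: dadd_def)
qed

lemma chain_step: assumes sf: "source_free G" and e: "e \<in> arr G"
  shows "\<exists>z. z \<in> arr G \<and> src G (chain G e j) = rng G z \<and> chain G e (Suc j) = comp G (chain G e j) z"
proof -
  let ?c = "chain G e j"
  have c: "?c \<in> arr G" using chain_props[OF sf e] by blast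
  have "{l\<in>arr G. rng G l = src G ?c \<and> deg G l = (\<lambda>_. 1)} \<noteq> {}"
    using sf kg_src c unfolding source_free_def by blast
  then have "\<exists>z. z \<in> arr G \<and> rng G z = src G ?c \<and> deg G z = (\<lambda>_. 1)" by blast
  from someI_ex[OF this] show ?thesis by auto
qed

lemma chain_pre: assumes sf: "source_free G" and e: "e \<in> arr G" and jj: "j \<le> j'"
  shows "f1 (chain G e j') (deg G (chain G e j)) = chain G e j"
  using jj
proof (induction j' rule: dec_induct)
  case base then show ?case using f1_full chain_props[OF sf e] by blast
next
  case (step i)
  obtain z where z: "z \<in> arr G" "src G (chain G e i) = rng G z" "chain G e (Suc i) = comp G (chain G e i) z"
    using chain_step[OF sf e] by blast
  have le: "deg G (chain G e j) \<le> deg G (chain G e i)"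
    using chain_props[OF sf e, of j] chain_props[OF sf e, of i] step(1)
    by (auto simp: dadd_def le_fun_def)
  have "f1 (chain G e (Suc i)) (deg G (chain G e j)) = f1 (chain G e i) (deg G (chain G e j))"
    using f1_comp[OF _ z(1) z(2) le] chain_props[OF sf e] z(3) by simp
  then show ?case using step by simp
qed

lemma extend_path: assumes sf: "source_free G" and e: "e \<in> arr G"
  shows "\<exists>x\<in>inf_paths G. x dzero (deg G e) = e"
proof -
  let ?S = "\<lambda>q::'k\<Rightarrow>nat. sum q UNIV"
  define F where "F q = f1 (chain G e (?S q)) q" for q
  have qle: "q \<le> deg G (chain G e (?S q))" for q
  proof -
    have "q i \<le> deg G e i + ?S q" for i
      using member_le_sum[of i UNIV q] by (simp add: trans_le_add2)
    then show ?thesis using chain_props[OF sf e, of "?S q"] by (auto simp: dadd_def le_fun_def)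
  qed
  have Fp: "F q \<in> arr G \<and> deg G (F q) = q" for q
    unfolding F_def using fac_ex[OF _ qle] chain_props[OF sf e] by blast
  have coh: "f1 (F q') q = F q" if qq: "q \<le> q'" for q q'
  proof -
    have S: "?S q \<le> ?S q'" using qq by (auto simp: le_fun_def intro: sum_mono)
    have ca: "chain G e (?S q') \<in> arr G" using chain_props[OF sf e] by blast
    have d1: "deg G (chain G e (?S q)) \<le> deg G (chain G e (?S q'))"
      using chain_props[OF sf e, of "?S q"] chain_props[OF sf e, of "?S q'"] S
      by (auto simp: dadd_def le_fun_def)
    have "f1 (F q') q = f1 (chain G e (?S q')) q"
      unfolding F_def using f1_f1[OF ca qq qle] .
    also have "\<dots> = f1 (f1 (chain G e (?S q')) (deg G (chain G e (?S q)))) q"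
      using f1_f1[OF ca qle[of q] d1] by simp
    also have "\<dots> = F q" unfolding F_def using chain_pre[OF sf e S] by simp
    finally show ?thesis .
  qed
  let ?x = "\<lambda>p q. if p \<le> q then f2 (F q) p else undefined"
  have mp1: "?x \<in> inf_paths G" by (rule mk_path(1)[of F]) (use Fp coh in auto)
  have mp2: "?x dzero q = F q" for q by (rule mk_path(2)[of F]) (use Fp coh in auto)
  have "F (deg G e) = e"
  proof -
    have "F (deg G e) = f1 (f1 (chain G e (?S (deg G e))) (deg G (chain G e 0))) (deg G e)"
      unfolding F_def using f1_f1[OF _ _ qle] chain_props[OF sf e] by simp
    also have "\<dots> = e" using chain_pre[OF sf e, of 0] f1_full[OF e] by simp
    finally show ?thesis .
  qed
  then have "?x dzero (deg G e) = e" using mp2 by metis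
  then show ?thesis using mp1 by (intro bexI[of _ ?x])
qed


lemma pre_W: assumes z: "z \<in> inf_paths G" and z0: "z dzero (deg G l) = l"
  and zx: "\<forall>m n. m \<le> n \<longrightarrow> z (dadd (deg G l) m) (dadd (deg G l) n) = x m n"
  shows "z dzero (dadd (deg G l) q) = comp G l (x dzero q)"
proof -
  have "z (deg G l) (dadd (deg G l) q) = x dzero q" using zx[rule_format, of dzero q] by simp
  then show ?thesis using inf_comp[OF z, of dzero "deg G l" "dadd (deg G l) q"] z0 by simp
qed

lemma prefix_props: assumes l: "l \<in> arr G" and x: "x \<in> inf_paths G" and x0: "x dzero dzero = src G l"
  shows "prefix G l x \<in> inf_paths G \<and> prefix G l x dzero (deg G l) = l \<and>
     (\<forall>m n. m \<le> n \<longrightarrow> prefix G l x (dadd (deg G l) m) (dadd (deg G l) n) = x m n)"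
proof -
  define a where "a = deg G l"
  define W where "W q = comp G l (x dzero q)" for q
  have xq: "x dzero q \<in> arr G" "deg G (x dzero q) = q" "src G l = rng G (x dzero q)" for q
    using inf_arr[OF x, of dzero q] inf_rng[OF x, of q] x0 by auto
  have Wp: "W q \<in> arr G" "deg G (W q) = dadd a q" for q
    unfolding W_def a_def using kg_comp[OF l xq(1) xq(3)] kg_deg[OF l xq(1) xq(3)] xq(2) by auto
  have Wc: "W q' = comp G (W q) (x q q')" "src G (W q) = rng G (x q q')" if qq: "q \<le> q'" for q q'
  proof -
    have c: "comp G (x dzero q) (x q q') = x dzero q'" "src G (x dzero q) = rng G (x q q')"
      using inf_comp[OF x, of dzero q q'] qq by auto
    have xa: "x q q' \<in> arr G" using inf_arr[OF x qq] by blast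
    show "W q' = comp G (W q) (x q q')"
      unfolding W_def using kg_assoc[OF l xq(1) xa xq(3) c(2)] c(1) by simp
    show "src G (W q) = rng G (x q q')" unfolding W_def using kg_comp[OF l xq(1) xq(3)] c(2) by simp
  qed
  define F where "F q = f1 (W q) q" for q
  have qW: "q \<le> deg G (W q)" for q using Wp by simp
  have Fp: "F q \<in> arr G \<and> deg G (F q) = q" for q
    unfolding F_def using fac_ex[OF Wp(1) qW] by blast
  have coh: "f1 (F q') q = F q" if qq: "q \<le> q'" for q q'
  proof -
    have "f1 (F q') q = f1 (W q') q" unfolding F_def using f1_f1[OF Wp(1) qq qW] .
    also have "\<dots> = f1 (W q) q"
      using Wc[OF qq] f1_comp[OF Wp(1) _ _ qW] inf_arr[OF x qq] by simp
    finally show ?thesis unfolding F_def .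
  qed
  let ?y = "\<lambda>p q. if p \<le> q then f2 (F q) p else undefined"
  have y1: "?y \<in> inf_paths G" by (rule mk_path(1)[of F]) (use Fp coh in auto)
  have y2: "?y dzero q = F q" for q by (rule mk_path(2)[of F]) (use Fp coh in auto)
  have ya: "?y dzero a = l"
  proof -
    have "F a = f1 (comp G l (x dzero a)) (deg G l)" unfolding F_def W_def a_def ..
    also have "\<dots> = l" using fac_eq(1)[OF l xq(1) xq(3)] .
    finally show ?thesis using y2 by metis
  qed
  have yx: "\<forall>m n. m \<le> n \<longrightarrow> ?y (dadd a m) (dadd a n) = x m n"
  proof (intro allI impI)
    fix m n :: "'k \<Rightarrow> nat" assume mn: "m \<le> n"
    have amn: "dadd a m \<le> dadd a n" using dadd_mono[OF mn] .
    have "F (dadd a n) = f1 (comp G (W n) (x n (dadd a n))) (deg G (W n))"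
      unfolding F_def using Wc[of n "dadd a n"] Wp by simp
    also have "\<dots> = W n"
      using fac_eq(1)[OF Wp(1) _ Wc(2)[of n "dadd a n"]] inf_arr[OF x, of n "dadd a n"] by simp
    finally have "F (dadd a n) = comp G (W m) (x m n)" using Wc[OF mn] by simp
    then have "f2 (F (dadd a n)) (dadd a m) = x m n"
      using fac_eq(2)[OF Wp(1) _ Wc(2)[OF mn]] inf_arr[OF x mn] Wp(2) by simp
    then show "?y (dadd a m) (dadd a n) = x m n" using amn by simp
  qed
  let ?P = "\<lambda>y. y \<in> inf_paths G \<and> y dzero (deg G l) = l \<and>
      (\<forall>m n. m \<le> n \<longrightarrow> y (dadd (deg G l) m) (dadd (deg G l) n) = x m n)"
  have Py: "?P ?y" using y1 ya yx unfolding a_def by blast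
  have uniq: "z = ?y" if Pz: "?P z" for z
  proof (rule inf_eq)
    show "z \<in> inf_paths G" "?y \<in> inf_paths G" using Pz y1 by auto
    fix q
    have e1: "z dzero (dadd (deg G l) q) = comp G l (x dzero q)"
      by (rule pre_W) (use Pz in auto)
    have e2: "?y dzero (dadd (deg G l) q) = comp G l (x dzero q)"
      by (rule pre_W) (use Py in auto)
    have "z dzero (dadd (deg G l) q) = ?y dzero (dadd (deg G l) q)" using e1 e2 by simp
    then show "\<exists>Q. q \<le> Q \<and> z dzero Q = ?y dzero Q" by (intro exI[of _ "dadd (deg G l) q"]) simp
  qed
  have "prefix G l x = ?y" unfolding prefix_def
    by (rule the_equality) (use Py uniq in blast)+
  then show ?thesis using Py by simp
qed

lemma periodic_ext: assumes sf: "source_free G" and per: "periodic_pair G l n"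
  and e: "e \<in> arr G" "rng G e = src G l" "deg G e = deg G n"
  shows "\<exists>e'\<in>arr G. src G n = rng G e' \<and> comp G l e = comp G n e'"
proof -
  have l: "l \<in> arr G" and n: "n \<in> arr G" and sl: "src G l = src G n"
    and pp: "\<forall>x\<in>Zv G (src G l). prefix G l x = prefix G n x"
    using per unfolding periodic_pair_def by auto
  obtain x where x: "x \<in> inf_paths G" "x dzero (deg G e) = e" using extend_path[OF sf e(1)] by blast
  have x0: "x dzero dzero = src G l" using inf_rng[OF x(1), of "deg G e"] x(2) e(2) by simp
  then have "x \<in> Zv G (src G l)" using x unfolding Zv_def by simp
  then have eq: "prefix G l x = prefix G n x" using pp by blast
  let ?y = "prefix G l x"
  note Pl = prefix_props[OF l x(1) x0] and Pn = prefix_props[OF n x(1) x0[unfolded sl]]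
  let ?M = "dadd (deg G l) (deg G n)"
  have y1: "?y dzero ?M = comp G l (x dzero (deg G n))"
    using pre_W[of ?y l x] Pl by blast
  have "?y dzero (dadd (deg G n) (deg G l)) = comp G n (x dzero (deg G l))"
    using pre_W[of "prefix G n x" n x] Pn eq by simp
  moreover have "dadd (deg G n) (deg G l) = ?M" by (auto simp: dadd_def)
  ultimately have y2: "?y dzero ?M = comp G n (x dzero (deg G l))" by simp
  have "x dzero (deg G l) \<in> arr G" using inf_arr[OF x(1), of dzero "deg G l"] by simp
  moreover have "src G n = rng G (x dzero (deg G l))" using inf_rng[OF x(1), of "deg G l"] x0 sl by simp
  moreover have "comp G l e = comp G n (x dzero (deg G l))" using y1 y2 x(2) e(3) by simp
  ultimately show ?thesis by blast
qed

end



context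
  fixes M :: "'x measure" and G :: "('a, 'k::finite) kg" and D :: "'a \<Rightarrow> 'x set"
    and tau :: "'a \<Rightarrow> 'x \<Rightarrow> 'x" and taum :: "('k \<Rightarrow> nat) \<Rightarrow> 'x \<Rightarrow> 'x"
  assumes kg: "kgraph G" and sb: "lambda_sbfs M G D tau taum"
begin

abbreviation "R \<equiv> Rset D tau"

lemma sbd: "l \<in> arr G \<Longrightarrow> D l \<in> sets M \<and>
       tau l \<in> measurable (restrict_space M (D l)) M \<and>
       (\<forall>A\<in>sets M. A \<subseteq> D l \<longrightarrow> tau l ` A \<in> sets M) \<and>
       (\<exists>f\<in>borel_measurable M. (AE x in M. x \<in> D l \<longrightarrow> f x > 0) \<and>
          (\<forall>A\<in>sets M. A \<subseteq> D l \<longrightarrow> emeasure M (tau l ` A) = set_nn_integral M A f))"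
  using sb unfolding lambda_sbfs_def sbfs_deg_def by blast

lemma D_sets: "l \<in> arr G \<Longrightarrow> D l \<in> sets M" using sbd by blast
lemma R_sets: "l \<in> arr G \<Longrightarrow> R l \<in> sets M"
  using sbd[of l] unfolding Rset_def by blast

lemma disj: "l \<in> arr G \<Longrightarrow> n \<in> arr G \<Longrightarrow> deg G l = deg G n \<Longrightarrow> l \<noteq> n \<Longrightarrow>
   emeasure M (R l \<inter> R n) = 0"
  using sb unfolding lambda_sbfs_def sbfs_deg_def by metis

lemma cover: "emeasure M (space M - (\<Union>l\<in>{l\<in>arr G. deg G l = m}. R l)) = 0"
  using sb unfolding lambda_sbfs_def sbfs_deg_def by blast

lemma vid: "v \<in> vert G \<Longrightarrow> x \<in> D v \<Longrightarrow> tau v x = x"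
  using sb unfolding lambda_sbfs_def by blast

lemma compc: "l \<in> arr G \<Longrightarrow> n \<in> arr G \<Longrightarrow> rng G n = src G l \<Longrightarrow>
       emeasure M (R n - D l) = 0 \<and>
       emeasure M (symdiff (D n) (D (comp G l n))) = 0 \<and>
       (AE x in M. x \<in> D n \<longrightarrow> tau l (tau n x) = tau (comp G l n) x)"
  using sb unfolding lambda_sbfs_def by blast

lemma null_AE: assumes "A \<in> sets M" "B \<in> sets M" "emeasure M (A - B) = 0"
  shows "AE x in M. x \<in> A \<longrightarrow> x \<in> B"
proof -
  have "A - B \<in> null_sets M" using assms by auto
  from AE_not_in[OF this] show ?thesis by eventually_elim auto
qed

lemma L1: assumes l: "l \<in> arr G" and P: "AE x in M. x \<in> D l \<longrightarrow> P x"
  shows "AE y in M. y \<in> R l \<longrightarrow> (\<exists>x\<in>D l. P x \<and> y = tau l x)"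
proof -
  obtain N where N: "{x\<in>space M. \<not> (x \<in> D l \<longrightarrow> P x)} \<subseteq> N" "N \<in> null_sets M"
    using P by (auto elim!: AE_E)
  obtain f where f: "f \<in> borel_measurable M"
     "\<forall>A\<in>sets M. A \<subseteq> D l \<longrightarrow> emeasure M (tau l ` A) = set_nn_integral M A f"
    using sbd[OF l] by blast
  let ?A = "N \<inter> D l"
  have An: "?A \<in> null_sets M" using null_set_Int2[OF N(2) D_sets[OF l]] .
  have As: "?A \<in> sets M" using An by auto
  have "emeasure M (tau l ` ?A) = set_nn_integral M ?A f" using f(2) As by blast
  also have "\<dots> = 0" using nn_integral_null_set[OF An, of f] by simp
  finally have "tau l ` ?A \<in> null_sets M" using sbd[OF l] As by auto
  from AE_not_in[OF this] show ?thesis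
  proof eventually_elim
    case (elim y)
    show ?case
    proof
      assume "y \<in> R l"
      then obtain x where x: "x \<in> D l" "y = tau l x" unfolding Rset_def by blast
      have "x \<in> space M" using x(1) sets.sets_into_space[OF D_sets[OF l]] by blast
      moreover have "x \<notin> N" using x elim by blast
      ultimately have "P x" using N(1) x(1) by blast
      then show "\<exists>x\<in>D l. P x \<and> y = tau l x" using x by blast
    qed
  qed
qed

lemma L2: assumes l: "l \<in> arr G" and Q: "AE y in M. y \<in> R l \<longrightarrow> Q y"
  shows "AE x in M. x \<in> D l \<longrightarrow> Q (tau l x)"
proof -
  obtain N where N: "{x\<in>space M. \<not> (x \<in> R l \<longrightarrow> Q x)} \<subseteq> N" "N \<in> null_sets M"
    using Q by (auto elim!: AE_E)
  obtain f where f: "f \<in> borel_measurable M" "AE x in M. x \<in> D l \<longrightarrow> f x > 0"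
     "\<forall>A\<in>sets M. A \<subseteq> D l \<longrightarrow> emeasure M (tau l ` A) = set_nn_integral M A f"
    using sbd[OF l] by blast
  have Dl: "D l \<in> sets M" using D_sets[OF l] .
  have tm: "tau l \<in> measurable (restrict_space M (D l)) M" using sbd[OF l] by blast
  let ?A = "tau l -` N \<inter> D l"
  have "tau l -` N \<inter> space (restrict_space M (D l)) \<in> sets (restrict_space M (D l))"
    using measurable_sets[OF tm] N(2) by auto
  moreover have "space (restrict_space M (D l)) = D l"
    using sets.sets_into_space[OF Dl] by (auto simp: space_restrict_space)
  ultimately have As: "?A \<in> sets M" using sets_restrict_space_iff[of "D l" M] Dl
    sets.sets_into_space[OF Dl] by (metis Int_absorb2)
  have "tau l ` ?A \<subseteq> N" by auto
  moreover have "tau l ` ?A \<in> sets M" using sbd[OF l] As by auto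
  ultimately have "emeasure M (tau l ` ?A) = 0" using N(2)
    by (meson emeasure_eq_0 null_setsD1 null_setsD2)
  then have "set_nn_integral M ?A f = 0" using f(3) As by auto
  then have "AE x in M. f x * indicator ?A x = 0"
    using nn_integral_0_iff_AE[of "\<lambda>x. f x * indicator ?A x" M] f(1) As by auto
  then have "AE x in M. x \<notin> ?A" using f(2) by eventually_elim (auto simp: indicator_def)
  then show ?thesis
  proof eventually_elim
    case (elim x)
    show ?case
    proof
      assume x: "x \<in> D l"
      have "tau l x \<in> R l" using x unfolding Rset_def by blast
      moreover have "tau l x \<in> space M" using calculation sets.sets_into_space[OF R_sets[OF l]] by blast
      moreover have "tau l x \<notin> N" using elim x by blast
      ultimately show "Q (tau l x)" using N(1) by blast
    qed
  qed
qed


lemma symd_AE: assumes "A \<in> sets M" "B \<in> sets M" "emeasure M (symdiff A B) = 0"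
  shows "AE x in M. (x \<in> A \<longleftrightarrow> x \<in> B)"
proof -
  have "symdiff A B \<in> null_sets M" using assms unfolding symdiff_def by auto
  from AE_not_in[OF this] show ?thesis by eventually_elim (auto simp: symdiff_def)
qed

lemma comp_facts: assumes l: "l \<in> arr G" and n: "n \<in> arr G" and c: "rng G n = src G l"
  shows "AE z in M. z \<in> D n \<longleftrightarrow> z \<in> D (comp G l n)"
    "AE z in M. z \<in> D n \<longrightarrow> tau l (tau n z) = tau (comp G l n) z"
    "AE z in M. z \<in> D n \<longrightarrow> tau n z \<in> D l"
    "comp G l n \<in> arr G"
proof -
  show ca: "comp G l n \<in> arr G" using kg_comp[OF kg l n] c by simp
  show "AE z in M. z \<in> D n \<longleftrightarrow> z \<in> D (comp G l n)"
    using symd_AE[OF D_sets[OF n] D_sets[OF ca]] compc[OF l n c] by blast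
  show "AE z in M. z \<in> D n \<longrightarrow> tau l (tau n z) = tau (comp G l n) z" using compc[OF l n c] by blast
  show "AE z in M. z \<in> D n \<longrightarrow> tau n z \<in> D l"
    using L2[OF n null_AE[OF R_sets[OF n] D_sets[OF l]]] compc[OF l n c] by blast
qed

lemma L3: assumes l: "l \<in> arr G" and n: "n \<in> arr G" and c: "rng G n = src G l"
  shows "AE y in M. y \<in> R (comp G l n) \<longrightarrow> y \<in> R l"
proof -
  note cf = comp_facts[OF l n c]
  have "AE z in M. z \<in> D (comp G l n) \<longrightarrow> tau (comp G l n) z \<in> R l"
    using cf(1,2,3)
  proof eventually_elim
    case (elim z)
    then show ?case unfolding Rset_def by (metis imageI)
  qed
  from L1[OF cf(4) this] show ?thesis by auto
qed

lemma factA: assumes l: "l \<in> arr G"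
  shows "AE x in M. x \<in> D l \<longrightarrow> (\<exists>e\<in>arr G. rng G e = src G l \<and> deg G e = p \<and> x \<in> R e)"
proof -
  have cnt: "countable (arr G)" using kg unfolding kgraph_def by blast
  have s: "src G l \<in> vert G" "src G l \<in> arr G" using kg_src[OF kg l] kg_vert[OF kg] by auto
  have a1: "AE x in M. x \<in> D l \<longrightarrow> x \<in> D (src G l)"
  proof -
    have "comp G l (src G l) = l" using kg_id(2)[OF kg l] .
    then show ?thesis using comp_facts(1)[OF l s(2)] kg_vrs[OF kg s(1)] by auto
  qed
  have Rs: "R (src G l) = D (src G l)"
    unfolding Rset_def using vid[OF s(1)] by (auto simp: image_iff)
  have E: "{e\<in>arr G. deg G e = p} \<subseteq> arr G" by auto
  have U: "(\<Union>e\<in>{e\<in>arr G. deg G e = p}. R e) \<in> sets M"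
    by (rule sets.countable_UN'') (use countable_subset[OF E cnt] R_sets in auto)
  have a2: "AE x in M. x \<in> space M \<longrightarrow> x \<in> (\<Union>e\<in>{e\<in>arr G. deg G e = p}. R e)"
    using null_AE[OF sets.top U cover] .
  have a3: "AE x in M. \<forall>e\<in>arr G. x \<in> R e \<longrightarrow> x \<in> R (rng G e)"
  proof (rule AE_ball_countable'[OF _ cnt])
    fix e assume e: "e \<in> arr G"
    have r: "rng G e \<in> vert G" "rng G e \<in> arr G" using kg_rng[OF kg e] kg_vert[OF kg] by auto
    show "AE x in M. x \<in> R e \<longrightarrow> x \<in> R (rng G e)"
      using L3[OF r(2) e] kg_vrs[OF kg r(1)] kg_id(1)[OF kg e] by simp
  qed
  have a4: "AE x in M. \<forall>w\<in>vert G. w \<noteq> src G l \<longrightarrow> \<not> (x \<in> R w \<and> x \<in> R (src G l))"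
  proof (rule AE_ball_countable'[OF _ countable_subset[OF kg_vert'[OF kg] cnt]])
    fix w assume w: "w \<in> vert G"
    show "AE x in M. w \<noteq> src G l \<longrightarrow> \<not> (x \<in> R w \<and> x \<in> R (src G l))"
    proof (cases "w = src G l")
      case False
      have "R w \<inter> R (src G l) \<in> null_sets M"
        using disj[OF kg_vert[OF kg w] s(2)] vert_deg[OF kg w] vert_deg[OF kg s(1)] False
          R_sets[OF kg_vert[OF kg w]] R_sets[OF s(2)] by auto
      from AE_not_in[OF this] show ?thesis by auto
    qed simp
  qed
  show ?thesis using a1 a2 a3 a4
  proof eventually_elim
    case (elim x)
    show ?case
    proof
      assume x: "x \<in> D l"
      have xs: "x \<in> space M" using x sets.sets_into_space[OF D_sets[OF l]] by blast
      then obtain e where e: "e \<in> arr G" "deg G e = p" "x \<in> R e" using elim by blast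
      have "x \<in> R (rng G e)" using elim e by blast
      moreover have "x \<in> R (src G l)" using elim x Rs by blast
      ultimately have "rng G e = src G l" using elim kg_rng[OF kg e(1)] by blast
      then show "\<exists>e\<in>arr G. rng G e = src G l \<and> deg G e = p \<and> x \<in> R e" using e by blast
    qed
  qed
qed

lemma factB: assumes l: "l \<in> arr G" and e: "e \<in> arr G" and c: "rng G e = src G l"
  shows "AE x in M. x \<in> R e \<longrightarrow> tau l x \<in> R (comp G l e)"
proof -
  note cf = comp_facts[OF l e c]
  have "AE z in M. z \<in> D e \<longrightarrow> tau l (tau e z) \<in> R (comp G l e)"
    using cf(1,2)
  proof eventually_elim
    case (elim z)
    then show ?case unfolding Rset_def by (metis imageI)
  qed
  from L1[OF e this] show ?thesis by auto
qed

lemma main_half: assumes sf: "source_free G" and per: "periodic_pair G l n"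
  shows "AE y in M. y \<in> R l \<longrightarrow> y \<in> R n"
proof -
  have l: "l \<in> arr G" and n: "n \<in> arr G" and sl: "src G l = src G n"
    using per unfolding periodic_pair_def by auto
  have cnt: "countable (arr G)" using kg unfolding kgraph_def by blast
  define E where "E = {e\<in>arr G. rng G e = src G l \<and> deg G e = deg G n}"
  have cE: "countable E" using countable_subset[OF _ cnt] unfolding E_def by auto
  have Q1: "AE x in M. \<forall>e\<in>E. x \<in> R e \<longrightarrow> tau l x \<in> R (comp G l e)"
    by (rule AE_ball_countable'[OF _ cE]) (use factB[OF l] in \<open>auto simp: E_def\<close>)
  have Q2: "AE y in M. \<forall>e\<in>E. y \<in> R (comp G l e) \<longrightarrow> y \<in> R n"
  proof (rule AE_ball_countable'[OF _ cE])
    fix e assume "e \<in> E"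
    then have e: "e \<in> arr G" "rng G e = src G l" "deg G e = deg G n" unfolding E_def by auto
    obtain e' where e': "e' \<in> arr G" "src G n = rng G e'" "comp G l e = comp G n e'"
      using periodic_ext[OF kg sf per e] by blast
    show "AE y in M. y \<in> R (comp G l e) \<longrightarrow> y \<in> R n"
      using L3[OF n e'(1) e'(2)[symmetric]] e'(3) by simp
  qed
  have "AE x in M. x \<in> D l \<longrightarrow> (\<exists>e\<in>E. x \<in> R e \<and> tau l x \<in> R (comp G l e))"
    using factA[OF l, of "deg G n"] Q1 by eventually_elim (auto simp: E_def)
  from L1[OF l this] Q2 show ?thesis by eventually_elim blast
qed

end


theorem proposition4p12:
  fixes G :: "('a, 'k::finite) kg" and M :: "'x measure"
    and D :: "'a \<Rightarrow> 'x set" and tau :: "'a \<Rightarrow> 'x \<Rightarrow> 'x"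
    and taum :: "('k \<Rightarrow> nat) \<Rightarrow> 'x \<Rightarrow> 'x" and l n :: 'a
  assumes "kgraph G" and "row_finite G" and "source_free G"
    and "lambda_sbfs M G D tau taum"
    and "periodic_pair G l n"
  shows "emeasure M (symdiff (Rset D tau l) (Rset D tau n)) = 0"
proof -
  have per2: "periodic_pair G n l" using assms(5) unfolding periodic_pair_def by metis
  have l: "l \<in> arr G" and n: "n \<in> arr G" using assms(5) unfolding periodic_pair_def by auto
  have h1: "AE y in M. y \<in> Rset D tau l \<longrightarrow> y \<in> Rset D tau n"
    using main_half[OF assms(1,4,3,5)] .
  have h2: "AE y in M. y \<in> Rset D tau n \<longrightarrow> y \<in> Rset D tau l"
    using main_half[OF assms(1,4,3) per2] .
  have Rl: "Rset D tau l \<in> sets M" and Rn: "Rset D tau n \<in> sets M"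
    using R_sets[OF assms(1,4)] l n by auto
  have S: "symdiff (Rset D tau l) (Rset D tau n) \<in> sets M" using Rl Rn unfolding symdiff_def by auto
  have eq: "{x\<in>space M. \<not> (x \<in> Rset D tau l \<longleftrightarrow> x \<in> Rset D tau n)} = symdiff (Rset D tau l) (Rset D tau n)"
    using sets.sets_into_space[OF Rl] sets.sets_into_space[OF Rn] unfolding symdiff_def by auto
  have "AE x in M. (x \<in> Rset D tau l \<longleftrightarrow> x \<in> Rset D tau n)" using h1 h2 by eventually_elim blast
  then show ?thesis using AE_iff_measurable[OF S eq] by simp
qed

end
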